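(* Let $\mathcal{X}\subseteq\mathbb{R}^D$, let $k:\mathcal{X}\times\mathcal{X}\to\mathbb{R}$ be an arbitrary positive definite kernel with reproducing kernel Hilbert space $\mathcal{H}_k$, and suppose $s\in\mathcal{H}_k$. Let $\mathbf{X}=\{\mathbf{x}_1,\dots,\mathbf{x}_N\}\subset\mathcal{X}$ and let the measurements be $y_i=s(\mathbf{x}_i)+\epsilon_i$, $i=1,\dots,N$, where the noise is bounded: $\epsilon_i^2<\sigma_\epsilon^2$ for all $i$. Then for every $\mathbf{x}\in\mathcal{X}$, $$E(\mathbf{x}\mid\mathbf{y}_{\mathbf{X}})\le \|s\|_{\mathcal{H}_k}\,P_{\mathbf{X}}(\mathbf{x})+\sqrt{\sigma_\epsilon^2\,N\,\Lambda_k^2(\mathbf{x})},$$ where $P_{\mathbf{X}}(\mathbf{x})=\sqrt{\sigma^2(\mathbf{x},\mathbf{x}\mid\mathbf{y}_{\mathbf{X}})}$ is the power function of $\mathbf{X}$ and $\Lambda_k(\mathbf{x})=\|K_{\mathbf{X}}^{-1}\mathbf{k}_{\mathbf{X}}(\mathbf{x})\|$ (Euclidean norm).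
   Context: A function $k:\mathcal{X}\times\mathcal{X}\to\mathbb{R}$ is positive definite if for every finite $\mathbf{X}\subset\mathcal{X}$ the matrix $[K_{\mathbf{X}}]_{i,j}=k(\mathbf{x}_i,\mathbf{x}_j)$ is positive definite. Notation: $[\mathbf{k}_{\mathbf{X}}(\mathbf{x})]_i=k(\mathbf{x},\mathbf{x}_i)$, $[\mathbf{y}_{\mathbf{X}}]_i=y_i$. The (zero-mean prior) Gaussian process regression estimate has mean $\mu(\mathbf{x}\mid\mathbf{y}_{\mathbf{X}})=\mathbf{k}_{\mathbf{X}}^{T}(\mathbf{x})K_{\mathbf{X}}^{-1}\mathbf{y}_{\mathbf{X}}$ and covariance $\sigma^2(\mathbf{x},\mathbf{x}'\mid\mathbf{y}_{\mathbf{X}})=k(\mathbf{x},\mathbf{x}')-\mathbf{k}_{\mathbf{X}}^{T}(\mathbf{x})K_{\mathbf{X}}^{-1}\mathbf{k}_{\mathbf{X}}(\mathbf{x}')$. The deterministic error is $E(\mathbf{x}\mid\mathbf{y}_{\mathbf{X}})=|s(\mathbf{x})-\mu(\mathbf{x}\mid\mathbf{y}_{\mathbf{X}})|$. *)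

theory Defs
  imports "HOL-Analysis.Analysis"
begin

definition pd_kernel :: "('a \<Rightarrow> 'a \<Rightarrow> real) \<Rightarrow> 'a set \<Rightarrow> bool" where
  "pd_kernel k X \<longleftrightarrow>
     (\<forall>x\<in>X. \<forall>y\<in>X. k x y = k y x) \<and>
     (\<forall>(zs :: 'a list) (c :: nat \<Rightarrow> real). distinct zs \<and> set zs \<subseteq> X \<and> (\<exists>i<length zs. c i \<noteq> 0) \<longrightarrow>
        (\<Sum>i<length zs. \<Sum>j<length zs. c i * c j * k (zs ! i) (zs ! j)) > 0)"

text \<open>Elements of the pre-Hilbert space span{k(.,z) | z in X}, given as finite lists of
(coefficient, centre) pairs; evaluation and squared pre-Hilbert norm.\<close>
definition comb_eval :: "('a \<Rightarrow> 'a \<Rightarrow> real) \<Rightarrow> (real \<times> 'a) list \<Rightarrow> 'a \<Rightarrow> real" where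
  "comb_eval k L x = (\<Sum>p\<leftarrow>L. fst p * k x (snd p))"

definition comb_sqnorm :: "('a \<Rightarrow> 'a \<Rightarrow> real) \<Rightarrow> (real \<times> 'a) list \<Rightarrow> real" where
  "comb_sqnorm k L = (\<Sum>p\<leftarrow>L. \<Sum>q\<leftarrow>L. fst p * fst q * k (snd p) (snd q))"

definition comb_diff :: "(real \<times> 'a) list \<Rightarrow> (real \<times> 'a) list \<Rightarrow> (real \<times> 'a) list" where
  "comb_diff L M = L @ map (\<lambda>q. (- fst q, snd q)) M"

text \<open>Moore--Aronszajn: H_k consists of the functions on X that are pointwise limits
of pre-Hilbert Cauchy sequences; the norm is the limit of the pre-Hilbert norms.\<close>
definition rkhs_approx ::
  "('a \<Rightarrow> 'a \<Rightarrow> real) \<Rightarrow> 'a set \<Rightarrow> ('a \<Rightarrow> real) \<Rightarrow> (nat \<Rightarrow> (real \<times> 'a) list) \<Rightarrow> bool" where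
  "rkhs_approx k X s F \<longleftrightarrow>
     (\<forall>n. set (map snd (F n)) \<subseteq> X) \<and>
     (\<forall>e>0. \<exists>M. \<forall>m\<ge>M. \<forall>n\<ge>M. comb_sqnorm k (comb_diff (F m) (F n)) < e\<^sup>2) \<and>
     (\<forall>x\<in>X. (\<lambda>n. comb_eval k (F n) x) \<longlonglongrightarrow> s x)"

definition in_rkhs :: "('a \<Rightarrow> 'a \<Rightarrow> real) \<Rightarrow> 'a set \<Rightarrow> ('a \<Rightarrow> real) \<Rightarrow> bool" where
  "in_rkhs k X s \<longleftrightarrow> (\<exists>F. rkhs_approx k X s F)"

definition rkhs_norm :: "('a \<Rightarrow> 'a \<Rightarrow> real) \<Rightarrow> 'a set \<Rightarrow> ('a \<Rightarrow> real) \<Rightarrow> real" where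
  "rkhs_norm k X s =
     Inf {c. \<exists>F. rkhs_approx k X s F \<and> (\<lambda>n. sqrt (comb_sqnorm k (F n))) \<longlonglongrightarrow> c}"

text \<open>GP regression quantities for data points xs indexed by a finite type 'n (N = CARD('n)).\<close>
definition gram :: "('a \<Rightarrow> 'a \<Rightarrow> real) \<Rightarrow> ('n::finite \<Rightarrow> 'a) \<Rightarrow> real^'n^'n" where
  "gram k xs = (\<chi> i j. k (xs i) (xs j))"

definition kvec :: "('a \<Rightarrow> 'a \<Rightarrow> real) \<Rightarrow> ('n::finite \<Rightarrow> 'a) \<Rightarrow> 'a \<Rightarrow> real^'n" where
  "kvec k xs x = (\<chi> i. k x (xs i))"

definition gp_mean :: "('a \<Rightarrow> 'a \<Rightarrow> real) \<Rightarrow> ('n::finite \<Rightarrow> 'a) \<Rightarrow> real^'n \<Rightarrow> 'a \<Rightarrow> real" where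
  "gp_mean k xs y x = kvec k xs x \<bullet> (matrix_inv (gram k xs) *v y)"

definition gp_cov :: "('a \<Rightarrow> 'a \<Rightarrow> real) \<Rightarrow> ('n::finite \<Rightarrow> 'a) \<Rightarrow> 'a \<Rightarrow> 'a \<Rightarrow> real" where
  "gp_cov k xs x x' = k x x' - kvec k xs x \<bullet> (matrix_inv (gram k xs) *v kvec k xs x')"

definition power_fun :: "('a \<Rightarrow> 'a \<Rightarrow> real) \<Rightarrow> ('n::finite \<Rightarrow> 'a) \<Rightarrow> 'a \<Rightarrow> real" where
  "power_fun k xs x = sqrt (gp_cov k xs x x)"

definition Lambda_k :: "('a \<Rightarrow> 'a \<Rightarrow> real) \<Rightarrow> ('n::finite \<Rightarrow> 'a) \<Rightarrow> 'a \<Rightarrow> real" where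
  "Lambda_k k xs x = norm (matrix_inv (gram k xs) *v kvec k xs x)"

definition det_error :: "('a \<Rightarrow> real) \<Rightarrow> ('a \<Rightarrow> 'a \<Rightarrow> real) \<Rightarrow> ('n::finite \<Rightarrow> 'a) \<Rightarrow> real^'n \<Rightarrow> 'a \<Rightarrow> real" where
  "det_error s k xs y x = \<bar>s x - gp_mean k xs y x\<bar>"

end

theory Submission
  imports Defs
begin

definition bil :: "('a \<Rightarrow> 'a \<Rightarrow> real) \<Rightarrow> (real \<times> 'a) list \<Rightarrow> (real \<times> 'a) list \<Rightarrow> real" where
  "bil k L M = (\<Sum>p\<leftarrow>L. \<Sum>q\<leftarrow>M. fst p * fst q * k (snd p) (snd q))"

definition scl :: "real \<Rightarrow> (real \<times> 'a) list \<Rightarrow> (real \<times> 'a) list" where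
  "scl t L = map (\<lambda>q. (t * fst q, snd q)) L"

lemma sqnorm_bil: "comb_sqnorm k L = bil k L L"
  by (simp add: comb_sqnorm_def bil_def)

lemma bil_append_left: "bil k (L @ L') M = bil k L M + bil k L' M"
  by (simp add: bil_def)

lemma bil_append_right: "bil k M (L @ L') = bil k M L + bil k M L'"
  by (simp add: bil_def sum_list_addf)

lemma sum_list_mult_const: "(\<Sum>q\<leftarrow>M. (c::real) * f q) = c * (\<Sum>q\<leftarrow>M. f q)"
  by (induction M) (simp_all add: distrib_left)

lemma sum_list_neg: "(\<Sum>q\<leftarrow>M. - (f q :: real)) = - (\<Sum>q\<leftarrow>M. f q)"
  by (induction M) simp_all

lemma bil_scl_left: "bil k (scl t L) M = t * bil k L M"
  by (induction L) (auto simp: bil_def scl_def algebra_simps sum_list_mult_const)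

lemma bil_scl_right: "bil k M (scl t L) = t * bil k M L"
proof -
  have "\<And>p. (\<Sum>q\<leftarrow>scl t L. fst p * fst q * k (snd p) (snd q)) = t * (\<Sum>q\<leftarrow>L. fst p * fst q * k (snd p) (snd q))"
    by (induction L) (auto simp: scl_def algebra_simps)
  then show ?thesis
    by (simp add: bil_def sum_list_mult_const)
qed

lemma comb_diff_scl: "comb_diff L M = L @ scl (-1) M"
  by (simp add: comb_diff_def scl_def)

lemma bil_sym:
  assumes "\<And>a b. a \<in> X \<Longrightarrow> b \<in> X \<Longrightarrow> k a b = k b a"
    and "set (map snd L) \<subseteq> X" "set (map snd M) \<subseteq> X"
  shows "bil k L M = bil k M L"
  using assms(2)
proof (induction L)
  case Nil
  then show ?case by (simp add: bil_def sum_list_addf)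
next
  case (Cons p L)
  have "bil k (p # L) M = (\<Sum>q\<leftarrow>M. fst p * fst q * k (snd p) (snd q)) + bil k L M"
    by (simp add: bil_def)
  also have "(\<Sum>q\<leftarrow>M. fst p * fst q * k (snd p) (snd q)) = (\<Sum>q\<leftarrow>M. fst q * fst p * k (snd q) (snd p))"
    apply (rule arg_cong[where f=sum_list])
    apply (rule map_cong[OF refl])
    using assms(1,3) Cons.prems by auto
  also have "bil k L M = bil k M L" using Cons by auto
  finally show ?case by (simp add: bil_def sum_list_addf)
qed

definition cf :: "(real \<times> 'a) list \<Rightarrow> 'a \<Rightarrow> real" where
  "cf L z = (\<Sum>p\<leftarrow>L. if snd p = z then fst p else 0)"

lemma sl_conv:
  assumes "finite S" "set (map snd L) \<subseteq> S"
  shows "(\<Sum>p\<leftarrow>L. fst p * g (snd p)) = (\<Sum>z\<in>S. cf L z * g z)"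
  using assms(2)
proof (induction L)
  case Nil
  then show ?case by (simp add: cf_def)
next
  case (Cons q L)
  have "(\<Sum>z\<in>S. cf (q # L) z * g z) = (\<Sum>z\<in>S. (if snd q = z then fst q * g z else 0) + cf L z * g z)"
    by (rule sum.cong) (auto simp: cf_def algebra_simps)
  also have "\<dots> = fst q * g (snd q) + (\<Sum>z\<in>S. cf L z * g z)"
    using Cons.prems assms(1) by (simp add: sum.distrib)
  finally show ?case using Cons by simp
qed

lemma sq_conv:
  assumes "finite S" "set (map snd L) \<subseteq> S"
  shows "bil k L L = (\<Sum>z\<in>S. \<Sum>w\<in>S. cf L z * cf L w * k z w)"
proof -
  have "bil k L L = (\<Sum>p\<leftarrow>L. fst p * (\<Sum>q\<leftarrow>L. fst q * k (snd p) (snd q)))"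
    by (simp add: bil_def sum_list_mult_const mult.assoc)
  also have "\<dots> = (\<Sum>p\<leftarrow>L. fst p * (\<Sum>w\<in>S. cf L w * k (snd p) w))"
    using sl_conv[OF assms, of "\<lambda>w. k _ w"] by simp
  also have "\<dots> = (\<Sum>z\<in>S. cf L z * (\<Sum>w\<in>S. cf L w * k z w))"
    by (rule sl_conv[OF assms])
  finally show ?thesis by (simp add: sum_distrib_left mult.assoc)
qed

lemma pd_nonneg:
  assumes "pd_kernel k X" "finite S" "S \<subseteq> X"
  shows "(\<Sum>z\<in>S. \<Sum>w\<in>S. c z * c w * k z w) \<ge> 0"
proof -
  obtain zs where zs: "set zs = S" "distinct zs" using finite_distinct_list[OF assms(2)] by blast
  have eq: "(\<Sum>z\<in>S. \<Sum>w\<in>S. c z * c w * k z w) =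
     (\<Sum>i<length zs. \<Sum>j<length zs. c (zs!i) * c (zs!j) * k (zs ! i) (zs ! j))"
  proof -
    have r: "sum f S = (\<Sum>i<length zs. f (zs!i))" for f :: "'a \<Rightarrow> real"
    proof -
      have "sum f S = sum_list (map f zs)" using zs by (simp add: sum_list_distinct_conv_sum_set)
      also have "\<dots> = (\<Sum>i<length zs. f (zs!i))" by (simp add: sum_list_sum_nth atLeast0LessThan)
      finally show ?thesis .
    qed
    show ?thesis by (simp add: r)
  qed
  show ?thesis
  proof (cases "\<exists>i<length zs. c (zs!i) \<noteq> 0")
    case True
    with assms(1) zs assms(3) have "(\<Sum>i<length zs. \<Sum>j<length zs. (\<lambda>i. c (zs!i)) i * (\<lambda>i. c (zs!i)) j * k (zs ! i) (zs ! j)) > 0"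
    proof -
      have "\<forall>(zs :: 'a list) (c :: nat \<Rightarrow> real). distinct zs \<and> set zs \<subseteq> X \<and> (\<exists>i<length zs. c i \<noteq> 0) \<longrightarrow>
        (\<Sum>i<length zs. \<Sum>j<length zs. c i * c j * k (zs ! i) (zs ! j)) > 0"
        using assms(1) unfolding pd_kernel_def by blast
      from spec[OF spec[OF this, of zs], of "\<lambda>i. c (zs!i)"] True zs assms(3)
      show ?thesis by auto
    qed
    then show ?thesis using eq by simp
  next
    case False
    then have "\<forall>z\<in>S. c z = 0" using zs by (auto simp: in_set_conv_nth)
    then show ?thesis by simp
  qed
qed

lemma bil_nonneg:
  assumes "pd_kernel k X" "set (map snd L) \<subseteq> X"
  shows "bil k L L \<ge> 0"
  using sq_conv[of "set (map snd L)" L k] pd_nonneg[OF assms(1), of "set (map snd L)"] assms(2)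
  by simp

lemma quad_cs:
  fixes a b c :: real
  assumes "a \<ge> 0" "c \<ge> 0" "\<And>t. a + 2 * t * b + t\<^sup>2 * c \<ge> 0"
  shows "b\<^sup>2 \<le> a * c"
proof (cases "c = 0")
  case True
  show ?thesis
  proof (rule ccontr)
    assume "\<not> ?thesis"
    then have "b \<noteq> 0" using True by simp
    have "a + 2 * (-(a+1)/(2*b)) * b + (-(a+1)/(2*b))\<^sup>2 * c \<ge> 0" by (rule assms(3))
    with True \<open>b \<noteq> 0\<close> show False by (simp add: field_simps)
  qed
next
  case False
  then have c: "c > 0" using assms(2) by simp
  have "a + 2 * (-b/c) * b + (-b/c)\<^sup>2 * c \<ge> 0" by (rule assms(3))
  then have "a - b\<^sup>2 / c \<ge> 0" using c by (simp add: power2_eq_square field_simps)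
  then show ?thesis using c by (simp add: field_simps)
qed

lemma bil_cs:
  assumes "pd_kernel k X" "set (map snd L) \<subseteq> X" "set (map snd M) \<subseteq> X"
  shows "\<bar>bil k L M\<bar> \<le> sqrt (bil k L L) * sqrt (bil k M M)"
proof -
  have sym: "\<And>a b. a \<in> X \<Longrightarrow> b \<in> X \<Longrightarrow> k a b = k b a" using assms(1) by (simp add: pd_kernel_def)
  have "(bil k L M)\<^sup>2 \<le> bil k L L * bil k M M"
  proof (rule quad_cs)
    show "bil k L L \<ge> 0" "bil k M M \<ge> 0" using bil_nonneg assms by blast+
    fix t
    have "set (map snd (L @ scl t M)) \<subseteq> X" using assms by (auto simp: scl_def)
    then have "bil k (L @ scl t M) (L @ scl t M) \<ge> 0" using bil_nonneg assms(1) by blast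
    moreover have "bil k (L @ scl t M) (L @ scl t M) = bil k L L + 2 * t * bil k L M + t\<^sup>2 * bil k M M"
      using bil_sym[OF sym assms(3,2)]
      by (simp add: bil_append_left bil_append_right bil_scl_left bil_scl_right power2_eq_square algebra_simps)
    ultimately show "bil k L L + 2 * t * bil k L M + t\<^sup>2 * bil k M M \<ge> 0" by simp
  qed
  then have "sqrt ((bil k L M)\<^sup>2) \<le> sqrt (bil k L L * bil k M M)" by (rule real_sqrt_le_mono)
  then show ?thesis by (simp add: real_sqrt_mult)
qed


lemma sum_univ_list:
  assumes "distinct ixs" "set ixs = (UNIV :: 'n::finite set)"
  shows "(\<Sum>i\<leftarrow>ixs. f i) = (\<Sum>i\<in>UNIV. (f i :: real))"
  using assms by (simp add: sum_list_distinct_conv_sum_set)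

lemma pd_pos:
  fixes xs :: "'n::finite \<Rightarrow> 'a" and v :: "real^'n"
  assumes "pd_kernel k X" "inj xs" "\<And>i. xs i \<in> X" "v \<noteq> 0"
  shows "(\<Sum>i\<in>UNIV. \<Sum>j\<in>UNIV. v$i * v$j * k (xs i) (xs j)) > 0"
proof -
  obtain ixs :: "'n list" where ixs: "set ixs = UNIV" "distinct ixs"
    using finite_distinct_list[OF finite_class.finite_UNIV] by blast
  have r: "sum f UNIV = (\<Sum>j<length ixs. f (ixs!j))" for f :: "'n \<Rightarrow> real"
  proof -
    have "sum f UNIV = sum_list (map f ixs)" using ixs by (simp add: sum_list_distinct_conv_sum_set)
    also have "\<dots> = (\<Sum>j<length ixs. f (ixs!j))" by (simp add: sum_list_sum_nth atLeast0LessThan)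
    finally show ?thesis .
  qed
  have "\<forall>(zs :: 'a list) (c :: nat \<Rightarrow> real). distinct zs \<and> set zs \<subseteq> X \<and> (\<exists>i<length zs. c i \<noteq> 0) \<longrightarrow>
        (\<Sum>i<length zs. \<Sum>j<length zs. c i * c j * k (zs ! i) (zs ! j)) > 0"
    using assms(1) unfolding pd_kernel_def by blast
  note * = spec[OF spec[OF this, of "map xs ixs"], of "\<lambda>j. v $ (ixs!j)"]
  obtain i where "v $ i \<noteq> 0" using assms(4) by (metis vec_eq_iff zero_index)
  moreover obtain j where "j < length ixs" "ixs ! j = i" using ixs by (metis UNIV_I in_set_conv_nth)
  ultimately have "\<exists>j<length (map xs ixs). v $ (ixs!j) \<noteq> 0" by auto
  moreover have "distinct (map xs ixs)" using ixs assms(2) by (simp add: distinct_map inj_on_def inj_def)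
  moreover have "set (map xs ixs) \<subseteq> X" using assms(3) by auto
  ultimately have "(\<Sum>i<length ixs. \<Sum>j<length ixs. v $ (ixs!i) * v $ (ixs!j) * k (xs (ixs ! i)) (xs (ixs ! j))) > 0"
    using * by simp
  then show ?thesis by (simp add: r)
qed

theorem theorem1:
  fixes X :: "(real^'d) set"
    and k :: "real^'d \<Rightarrow> real^'d \<Rightarrow> real"
    and s :: "real^'d \<Rightarrow> real"
    and xs :: "'n::finite \<Rightarrow> real^'d"
    and y :: "real^'n"
    and sigma_eps :: real
    and x :: "real^'d"
  assumes "pd_kernel k X"
    and "in_rkhs k X s"
    and "inj xs"
    and "\<And>i. xs i \<in> X"
    and "\<And>i. (y $ i - s (xs i))\<^sup>2 < sigma_eps\<^sup>2"
    and "x \<in> X"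
  shows "det_error s k xs y x
           \<le> rkhs_norm k X s * power_fun k xs x
             + sqrt (sigma_eps\<^sup>2 * real CARD('n) * (Lambda_k k xs x)\<^sup>2)"
proof -
  have sym: "\<And>a b. a \<in> X \<Longrightarrow> b \<in> X \<Longrightarrow> k a b = k b a" using assms(1) by (simp add: pd_kernel_def)
  obtain ixs :: "'n list" where ixs: "distinct ixs" "set ixs = UNIV"
    using finite_distinct_list[OF finite_class.finite_UNIV] by blast
  note sl = sum_univ_list[OF ixs]
  define G where "G = gram k xs"
  define Gi where "Gi = matrix_inv G"
  define kv where "kv = kvec k xs x"
  define \<alpha> where "\<alpha> = Gi *v kv"
  have quad: "v \<bullet> (G *v v) = (\<Sum>i\<in>UNIV. \<Sum>j\<in>UNIV. v$i * v$j * k (xs i) (xs j))" for v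
    by (simp add: G_def gram_def inner_vec_def matrix_vector_mult_def sum_distrib_left mult_ac)
  have "\<forall>v. G *v v = 0 \<longrightarrow> v = 0"
  proof (intro allI impI)
    fix v assume "G *v v = 0"
    then have "v \<bullet> (G *v v) = 0" by simp
    then show "v = 0" using pd_pos[OF assms(1,3,4), of v] quad[of v] by (auto simp del: inner_zero_right)
  qed
  then have "invertible G" by (simp add: invertible_left_inverse matrix_left_invertible_ker)
  then have inv: "G ** Gi = mat 1 \<and> Gi ** G = mat 1"
    unfolding Gi_def matrix_inv_def invertible_def by (rule someI_ex)
  have "transpose G = G"
    using sym assms(4) by (simp add: G_def gram_def transpose_def vec_eq_iff)
  then have "transpose Gi ** G = mat 1"
    by (metis inv matrix_transpose_mul transpose_mat)
  then have GiT: "transpose Gi = Gi"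
    by (metis inv matrix_mul_assoc matrix_mul_lid matrix_mul_rid)
  have Ga: "G *v \<alpha> = kv"
    by (simp add: \<alpha>_def matrix_vector_mul_assoc inv)
  have mean: "gp_mean k xs y x = \<alpha> \<bullet> y"
  proof -
    have "gp_mean k xs y x = kv \<bullet> (Gi *v y)" by (simp add: gp_mean_def kv_def Gi_def G_def)
    also have "\<dots> = (kv v* Gi) \<bullet> y" by (simp add: dot_lmul_matrix)
    also have "\<dots> = \<alpha> \<bullet> y" by (metis \<alpha>_def GiT transpose_matrix_vector)
    finally show ?thesis .
  qed
  define h where "h = (1, x) # map (\<lambda>i. (- (\<alpha>$i), xs i)) ixs"
  have hX: "set (map snd h) \<subseteq> X" using assms(4,6) by (auto simp: h_def)
  have hL: "bil k L h = comb_eval k L x - (\<Sum>i\<in>UNIV. \<alpha>$i * comb_eval k L (xs i))"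
    if LX: "set (map snd L) \<subseteq> X" for L
  proof -
    have "bil k L h = bil k h L" by (rule bil_sym[OF sym LX hX])
    also have "\<dots> = comb_eval k L x - (\<Sum>i\<in>UNIV. \<alpha>$i * comb_eval k L (xs i))"
      by (simp add: bil_def h_def comb_eval_def sl sum_list_mult_const[symmetric] sum_negf[symmetric] mult.assoc sum_list_neg)
    finally show ?thesis .
  qed
  have ce: "comb_eval k h z = k z x - (\<Sum>j\<in>UNIV. \<alpha>$j * k z (xs j))" for z
    by (simp add: h_def comb_eval_def sl sum_negf)
  have ce0: "comb_eval k h (xs i) = 0" for i
  proof -
    have "(G *v \<alpha>) $ i = kv $ i" using Ga by simp
    then have "(\<Sum>j\<in>UNIV. \<alpha>$j * k (xs i) (xs j)) = k x (xs i)"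
      by (simp add: G_def gram_def kv_def kvec_def matrix_vector_mult_def mult.commute)
    then show ?thesis using ce sym assms(4,6) by simp
  qed
  have hh: "bil k h h = gp_cov k xs x x"
  proof -
    have "bil k h h = comb_eval k h x" using hL[OF hX] ce0 by simp
    also have "\<dots> = k x x - kv \<bullet> \<alpha>"
      using ce by (simp add: kv_def kvec_def inner_vec_def mult.commute)
    finally show ?thesis by (simp add: gp_cov_def \<alpha>_def Gi_def G_def kv_def)
  qed
  define P where "P = power_fun k xs x"
  have Pdef: "P = sqrt (bil k h h)" by (simp add: P_def power_fun_def hh)
  define sX where "sX = (\<chi> i. s (xs i))"
  have key: "\<bar>s x - \<alpha> \<bullet> sX\<bar> \<le> c * P"
    if F: "rkhs_approx k X s F" and c: "(\<lambda>n. sqrt (comb_sqnorm k (F n))) \<longlonglongrightarrow> c" for F c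
  proof -
    have FX: "\<And>n. set (map snd (F n)) \<subseteq> X" using F by (simp add: rkhs_approx_def)
    have conv: "\<And>z. z \<in> X \<Longrightarrow> (\<lambda>n. comb_eval k (F n) z) \<longlonglongrightarrow> s z" using F by (simp add: rkhs_approx_def)
    have "(\<lambda>n. comb_eval k (F n) x - (\<Sum>i\<in>UNIV. \<alpha>$i * comb_eval k (F n) (xs i)))
           \<longlonglongrightarrow> s x - (\<Sum>i\<in>UNIV. \<alpha>$i * s (xs i))"
      by (intro tendsto_diff tendsto_sum tendsto_mult_left conv assms(4,6))
    then have a: "(\<lambda>n. \<bar>bil k (F n) h\<bar>) \<longlonglongrightarrow> \<bar>s x - \<alpha> \<bullet> sX\<bar>"
      by (intro tendsto_rabs) (simp add: hL[OF FX] sX_def inner_vec_def)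
    have b: "(\<lambda>n. sqrt (bil k (F n) (F n)) * P) \<longlonglongrightarrow> c * P"
      using c by (intro tendsto_mult_right) (simp add: sqnorm_bil)
    show ?thesis
      apply (rule tendsto_le[OF trivial_limit_sequentially b a])
      using bil_cs[OF assms(1) FX hX] by (simp add: Pdef)
  qed
  define S where "S = {c. \<exists>F. rkhs_approx k X s F \<and> (\<lambda>n. sqrt (comb_sqnorm k (F n))) \<longlonglongrightarrow> c}"
  have "S \<noteq> {}"
  proof -
    obtain F where F: "rkhs_approx k X s F" using assms(2) by (auto simp: in_rkhs_def)
    have FX: "\<And>n. set (map snd (F n)) \<subseteq> X" using F by (simp add: rkhs_approx_def)
    define q where "q n = sqrt (bil k (F n) (F n))" for n
    have dq: "\<bar>q m - q n\<bar> \<le> sqrt (comb_sqnorm k (comb_diff (F m) (F n)))" for m n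
    proof -
      have qm: "q m \<ge> 0" "(q m)\<^sup>2 = bil k (F m) (F m)" using bil_nonneg[OF assms(1) FX] by (auto simp: q_def)
      have qn: "q n \<ge> 0" "(q n)\<^sup>2 = bil k (F n) (F n)" using bil_nonneg[OF assms(1) FX] by (auto simp: q_def)
      have B: "bil k (F m) (F n) \<le> q m * q n" using bil_cs[OF assms(1) FX[of m] FX[of n]] by (simp add: q_def)
      have "comb_sqnorm k (comb_diff (F m) (F n)) = bil k (F m) (F m) - 2 * bil k (F m) (F n) + bil k (F n) (F n)"
        using bil_sym[OF sym FX[of n] FX[of m]]
        by (simp add: sqnorm_bil comb_diff_scl bil_append_left bil_append_right bil_scl_left bil_scl_right)
      also have "\<dots> \<ge> (q m - q n)\<^sup>2" using B qm qn by (simp add: power2_diff)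
      finally have "sqrt ((q m - q n)\<^sup>2) \<le> sqrt (comb_sqnorm k (comb_diff (F m) (F n)))"
        by (rule real_sqrt_le_mono)
      then show ?thesis by simp
    qed
    have "Cauchy q"
    proof (rule metric_CauchyI)
      fix e :: real assume "e > 0"
      then obtain M where M: "\<forall>m\<ge>M. \<forall>n\<ge>M. comb_sqnorm k (comb_diff (F m) (F n)) < e\<^sup>2"
        using F by (auto simp: rkhs_approx_def)
      show "\<exists>M. \<forall>m\<ge>M. \<forall>n\<ge>M. dist (q m) (q n) < e"
      proof (intro exI allI impI)
        fix m n assume "m \<ge> M" "n \<ge> M"
        then have "sqrt (comb_sqnorm k (comb_diff (F m) (F n))) < sqrt (e\<^sup>2)" using M by (simp only: real_sqrt_less_iff)
        then show "dist (q m) (q n) < e" using dq[of m n] \<open>e > 0\<close> by (simp add: dist_real_def)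
      qed
    qed
    then obtain c where "q \<longlonglongrightarrow> c" using Cauchy_convergent_iff convergent_def by blast
    moreover have "(\<lambda>n. sqrt (comb_sqnorm k (F n))) = q" by (simp add: q_def sqnorm_bil fun_eq_iff)
    ultimately have "c \<in> S" using F unfolding S_def by auto
    then show ?thesis by blast
  qed
  define R where "R = sqrt (sigma_eps\<^sup>2 * real CARD('n) * (Lambda_k k xs x)\<^sup>2)"
  define e where "e = sX - y"
  have ne: "norm e \<le> sqrt (sigma_eps\<^sup>2 * real CARD('n))"
  proof -
    have "norm e = sqrt (\<Sum>i\<in>UNIV. (e$i)\<^sup>2)" by (simp add: norm_vec_def L2_set_def)
    moreover have "(\<Sum>i\<in>UNIV. (e$i)\<^sup>2) \<le> (\<Sum>i\<in>(UNIV::'n set). sigma_eps\<^sup>2)"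
    proof (rule sum_mono)
      fix i
      have "(e$i)\<^sup>2 = (y $ i - s (xs i))\<^sup>2" by (simp add: e_def sX_def power2_commute)
      then show "(e$i)\<^sup>2 \<le> sigma_eps\<^sup>2" using assms(5)[of i] by simp
    qed
    ultimately show ?thesis by (simp add: mult.commute)
  qed
  have Rr: "R = sqrt (sigma_eps\<^sup>2 * real CARD('n)) * norm \<alpha>"
    by (simp add: R_def real_sqrt_mult Lambda_k_def \<alpha>_def Gi_def G_def kv_def)
  have noise: "\<bar>\<alpha> \<bullet> e\<bar> \<le> R"
  proof -
    have "\<bar>\<alpha> \<bullet> e\<bar> \<le> norm \<alpha> * norm e" by (rule Cauchy_Schwarz_ineq2)
    also have "\<dots> \<le> norm \<alpha> * sqrt (sigma_eps\<^sup>2 * real CARD('n))" using ne by (simp add: mult_left_mono)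
    finally show ?thesis by (simp add: Rr mult.commute)
  qed
  have Eb: "det_error s k xs y x \<le> \<bar>s x - \<alpha> \<bullet> sX\<bar> + R"
  proof -
    have "det_error s k xs y x = \<bar>(s x - \<alpha> \<bullet> sX) + \<alpha> \<bullet> e\<bar>"
      by (simp add: det_error_def mean e_def inner_diff_right)
    also have "\<dots> \<le> \<bar>s x - \<alpha> \<bullet> sX\<bar> + \<bar>\<alpha> \<bullet> e\<bar>" by (rule abs_triangle_ineq)
    finally show ?thesis using noise by simp
  qed
  have all: "det_error s k xs y x \<le> c * P + R" if "c \<in> S" for c
    using that key Eb unfolding S_def by force
  have P0: "P \<ge> 0" using bil_nonneg[OF assms(1) hX] by (simp add: Pdef)
  have "det_error s k xs y x \<le> Inf S * P + R"
  proof (cases "P = 0")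
    case True
    then obtain c where "c \<in> S" using \<open>S \<noteq> {}\<close> by blast
    then show ?thesis using all True by force
  next
    case False
    then have Pp: "P > 0" using P0 by simp
    have "(det_error s k xs y x - R) / P \<le> Inf S"
    proof (rule cInf_greatest[OF \<open>S \<noteq> {}\<close>])
      fix c assume "c \<in> S"
      then show "(det_error s k xs y x - R) / P \<le> c" using all[of c] Pp by (simp add: divide_le_eq)
    qed
    then show ?thesis using Pp by (simp add: divide_le_eq)
  qed
  then show ?thesis by (simp add: S_def P_def R_def rkhs_norm_def)
qed

end
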